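(* Let $f:\mathbb{R}^n\to\mathbb{R}$ be such that $\nabla f$ is Lipschitz continuous with constant $L$ on an open bounded domain $\mathcal{X}\subset\mathbb{R}^n$ containing $\overline{B}(y^0,\delta)$. Let $q=(n^2+3n)/2$, $n<p<q$, $\delta>0$, and let $\mathcal{Y}=\{y^0,\dots,y^p\}\subset\overline{B}(y^0,\delta)$ be poised in the minimum Frobenius norm sense and $\Lambda$-poised in $\overline{B}(y^0,\delta)$ in the minimum Frobenius norm sense, for some $\Lambda>0$. Let $\delta_{\max}>0$ with $\delta\le\delta_{\max}$. Let $\kappa\ge 0$ and let $\mathrm{m}$ be a relaxed minimum Frobenius norm model, i.e. $\mathrm{m}(x)=\sum_{j=0}^{p}\ell_j(x)\gamma_j$, where $\ell_0,\dots,\ell_p$ are the minimum Frobenius norm Lagrange polynomials of $\mathcal{Y}$ and the real numbers $\gamma_j$ are such that $|\mathrm{m}(y^j)-f(y^j)|\le\kappa\delta^2$ for all $j=0,\dots,p$. Then, for all $x$, \[ \|\nabla^2\mathrm{m}(x)\|\le\Big(\kappa+\frac{L}{2}\Big)\frac{4\Lambda(p+1)\sqrt{2(q+1)}}{c(\delta_{\max})^2}, \] where $c(\delta_{\max})=\min\{1,1/\delta_{\max},1/\delta_{\max}^2\}$.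
   Context: $\overline{B}(x,\delta)$ is the closed Euclidean ball; $\|\cdot\|$ is the Euclidean norm / induced matrix norm, $\|\cdot\|_\infty$ the max norm. Natural basis of quadratic polynomials: $\overline\phi_L(x)=(1,x_1,\dots,x_n)$ and $\overline\phi_Q(x)=(\tfrac12x_1^2,x_1x_2,x_1x_3,\dots,x_1x_n,\tfrac12x_2^2,\dots,x_{n-1}x_n,\tfrac12x_n^2)$; $\overline\phi=(\overline\phi_L,\overline\phi_Q)$ has $q+1$ components. For a list of functions $\phi=(\phi_0,\dots,\phi_r)$, $\mathbf{M}(\phi,\mathcal{Y})$ is the $(p+1)\times(r+1)$ matrix with $(i,k)$ entry $\phi_k(y^i)$. The set $\mathcal{Y}$ is poised in the minimum Frobenius norm sense if the matrix $\begin{bmatrix}\mathbf{M}(\overline\phi_Q,\mathcal{Y})\mathbf{M}(\overline\phi_Q,\mathcal{Y})^T & \mathbf{M}(\overline\phi_L,\mathcal{Y})\\ \mathbf{M}(\overline\phi_L,\mathcal{Y})^T & 0\end{bmatrix}$ is nonsingular. Minimum Frobenius norm Lagrange polynomials: $\ell_j(x)=\alpha_j^T\overline\phi(x)$, $j=0,\dots,p$, where $\alpha_j=((\alpha_j)_L,(\alpha_j)_Q)$ solves $\min\frac12\|\alpha_Q\|^2$ subject to $\mathbf{M}(\overline\phi_L,\mathcal{Y})\alpha_L+\mathbf{M}(\overline\phi_Q,\mathcal{Y})\alpha_Q=e_{j+1}$, with $e_{j+1}$ the $(j+1)$-th canonical vector of $\mathbb{R}^{p+1}$. A poised set $\mathcal{Y}$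 is $\Lambda$-poised in $B\subseteq\mathbb{R}^n$ in the minimum Frobenius norm sense if for every $x\in B$ the solution $\lambda(x)\in\mathbb{R}^{p+1}$ of $\min\frac12\|\mathbf{M}(\overline\phi_Q,\mathcal{Y})^T\lambda-\overline\phi_Q(x)\|^2$ subject to $\mathbf{M}(\overline\phi_L,\mathcal{Y})^T\lambda=\overline\phi_L(x)$ satisfies $\|\lambda(x)\|_\infty\le\Lambda$. *)

theory Defs
  imports "HOL-Analysis.Analysis"
begin

text \<open>Points of R^n are vectors of type real^'n (n = CARD('n)).
 Linear basis phi_L(x) = (1, x_1, ..., x_n) is indexed by 'n option
 (None for the constant 1, Some i for x_i).
 Quadratic basis phi_Q is indexed by the sets S of indices with card S = 1 or 2:
 {i} gives x_i^2/2, {i,j} (i distinct from j) gives x_i x_j.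
 This is the natural basis up to the ordering of its components.\<close>

definition phiL :: "real^'n \<Rightarrow> 'n option \<Rightarrow> real" where
  "phiL x k = (case k of None \<Rightarrow> 1 | Some i \<Rightarrow> x $ i)"

definition QI :: "'n set set" where
  "QI = {S. card S = 1 \<or> card S = 2}"

definition phiQ :: "real^'n \<Rightarrow> 'n set \<Rightarrow> real" where
  "phiQ x S = (if card S = 1 then (\<Prod>i\<in>S. x $ i)^2 / 2 else (\<Prod>i\<in>S. x $ i))"

text \<open>Sample set Y = {y 0, ..., y p}. Entry (i,j) of M(phi_Q,Y) M(phi_Q,Y)^T.\<close>
definition MQQ :: "(nat \<Rightarrow> real^'n) \<Rightarrow> nat \<Rightarrow> nat \<Rightarrow> real" where
  "MQQ y i j = (\<Sum>S\<in>QI. phiQ (y i) S * phiQ (y j) S)"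

text \<open>Poised in the minimum Frobenius norm sense: the square block matrix
 [[M_Q M_Q^T, M_L],[M_L^T, 0]] is nonsingular, i.e. its kernel is trivial.\<close>
definition mfn_poised :: "(nat \<Rightarrow> real^'n) \<Rightarrow> nat \<Rightarrow> bool" where
  "mfn_poised y p \<longleftrightarrow>
     (\<forall>(lam :: nat \<Rightarrow> real) (mu :: 'n option \<Rightarrow> real).
        (\<forall>i\<le>p. (\<Sum>j\<le>p. MQQ y i j * lam j) + (\<Sum>k\<in>UNIV. phiL (y i) k * mu k) = 0)
      \<and> (\<forall>k. (\<Sum>i\<le>p. phiL (y i) k * lam i) = 0)
      \<longrightarrow> (\<forall>i\<le>p. lam i = 0) \<and> (\<forall>k. mu k = 0))"

definition lag_constraint ::
  "(nat \<Rightarrow> real^'n) \<Rightarrow> nat \<Rightarrow> nat \<Rightarrow> ('n option \<Rightarrow> real) \<Rightarrow> ('n set \<Rightarrow> real) \<Rightarrow> bool" where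
  "lag_constraint y p j aL aQ \<longleftrightarrow>
     (\<forall>i\<le>p. (\<Sum>k\<in>UNIV. phiL (y i) k * aL k) + (\<Sum>S\<in>QI. phiQ (y i) S * aQ S)
              = (if i = j then 1 else 0))"

definition mfn_lagrange_coeffs ::
  "(nat \<Rightarrow> real^'n) \<Rightarrow> nat \<Rightarrow> nat \<Rightarrow> ('n option \<Rightarrow> real) \<Rightarrow> ('n set \<Rightarrow> real) \<Rightarrow> bool" where
  "mfn_lagrange_coeffs y p j aL aQ \<longleftrightarrow>
     lag_constraint y p j aL aQ \<and>
     (\<forall>bL bQ. lag_constraint y p j bL bQ \<longrightarrow>
        (\<Sum>S\<in>QI. (aQ S)^2) / 2 \<le> (\<Sum>S\<in>QI. (bQ S)^2) / 2)"

definition qpoly :: "('n option \<Rightarrow> real) \<Rightarrow> ('n set \<Rightarrow> real) \<Rightarrow> real^'n \<Rightarrow> real" where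
  "qpoly aL aQ x = (\<Sum>k\<in>UNIV. aL k * phiL x k) + (\<Sum>S\<in>QI. aQ S * phiQ x S)"

definition lam_constraint :: "(nat \<Rightarrow> real^'n) \<Rightarrow> nat \<Rightarrow> real^'n \<Rightarrow> (nat \<Rightarrow> real) \<Rightarrow> bool" where
  "lam_constraint y p x lam \<longleftrightarrow> (\<forall>k. (\<Sum>i\<le>p. phiL (y i) k * lam i) = phiL x k)"

definition lam_objective :: "(nat \<Rightarrow> real^'n) \<Rightarrow> nat \<Rightarrow> real^'n \<Rightarrow> (nat \<Rightarrow> real) \<Rightarrow> real" where
  "lam_objective y p x lam = (\<Sum>S\<in>QI. ((\<Sum>i\<le>p. phiQ (y i) S * lam i) - phiQ x S)^2) / 2"

definition mfn_lambda :: "(nat \<Rightarrow> real^'n) \<Rightarrow> nat \<Rightarrow> real^'n \<Rightarrow> (nat \<Rightarrow> real) \<Rightarrow> bool" where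
  "mfn_lambda y p x lam \<longleftrightarrow> lam_constraint y p x lam \<and>
     (\<forall>lam'. lam_constraint y p x lam' \<longrightarrow> lam_objective y p x lam \<le> lam_objective y p x lam')"

definition mfn_Lambda_poised :: "(nat \<Rightarrow> real^'n) \<Rightarrow> nat \<Rightarrow> real \<Rightarrow> (real^'n) set \<Rightarrow> bool" where
  "mfn_Lambda_poised y p Lam B \<longleftrightarrow> mfn_poised y p \<and>
     (\<forall>x\<in>B. \<forall>lam. mfn_lambda y p x lam \<longrightarrow> (\<forall>i\<le>p. \<bar>lam i\<bar> \<le> Lam))"

definition is_hessian :: "(real^'n \<Rightarrow> real) \<Rightarrow> real^'n \<Rightarrow> real^'n^'n \<Rightarrow> bool" where
  "is_hessian m x H \<longleftrightarrow> (\<exists>g. (\<forall>z. (m has_derivative (\<lambda>h. g z \<bullet> h)) (at z)) \<and>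
                               (g has_derivative (\<lambda>h. H *v h)) (at x))"

end

theory Submission
  imports Defs
begin

lemma finite_QI: "finite (QI :: 'n::finite set set)"
  by (rule finite_subset[of _ UNIV]) auto

definition kerpair :: "(nat \<Rightarrow> real^'n) \<Rightarrow> nat \<Rightarrow> ('n option \<Rightarrow> real) \<Rightarrow> ('n set \<Rightarrow> real) \<Rightarrow> bool" where
  "kerpair y p dL dQ \<longleftrightarrow> (\<forall>i\<le>p. (\<Sum>k\<in>UNIV. phiL (y i) k * dL k) + (\<Sum>S\<in>QI. phiQ (y i) S * dQ S) = 0)"

definition ALc :: "(nat \<Rightarrow> 'n option \<Rightarrow> real) \<Rightarrow> nat \<Rightarrow> (nat \<Rightarrow> real) \<Rightarrow> 'n option \<Rightarrow> real" where
  "ALc aL p u k = (\<Sum>j\<le>p. u j * aL j k)"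
definition AQc :: "(nat \<Rightarrow> 'n set \<Rightarrow> real) \<Rightarrow> nat \<Rightarrow> (nat \<Rightarrow> real) \<Rightarrow> 'n set \<Rightarrow> real" where
  "AQc aQ p u S = (\<Sum>j\<le>p. u j * aQ j S)"

lemma MLinj:
  assumes "mfn_poised y p" "\<forall>i\<le>p. (\<Sum>k\<in>UNIV. phiL (y i) k * mu k) = 0"
  shows "mu k = 0"
proof -
  have "(\<forall>i\<le>p. (\<Sum>j\<le>p. MQQ y i j * (\<lambda>_. 0::real) j) + (\<Sum>k\<in>UNIV. phiL (y i) k * mu k) = 0)
      \<and> (\<forall>k. (\<Sum>i\<le>p. phiL (y i) k * (\<lambda>_. 0::real) i) = 0)"
    using assms(2) by simp
  moreover note spec[OF spec[OF assms(1)[unfolded mfn_poised_def], of "\<lambda>_. 0"], of mu]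
  ultimately show ?thesis by blast
qed

lemma kkt:
  assumes "mfn_lagrange_coeffs y p j aL aQ" "kerpair y p dL dQ"
  shows "(\<Sum>S\<in>QI. aQ S * dQ S) = 0"
proof -
  define c where "c = (\<Sum>S\<in>QI. aQ S * dQ S)"
  define N where "N = (\<Sum>S\<in>QI. (dQ S)^2)"
  have N0: "N \<ge> 0" unfolding N_def by (simp add: sum_nonneg)
  have key: "0 \<le> 2*t*c + t^2 * N" for t
  proof -
    have "lag_constraint y p j (\<lambda>k. aL k + t * dL k) (\<lambda>S. aQ S + t * dQ S)"
    proof -
      { fix i assume i: "i \<le> p"
        have "(\<Sum>k\<in>UNIV. phiL (y i) k * (aL k + t * dL k)) + (\<Sum>S\<in>QI. phiQ (y i) S * (aQ S + t * dQ S))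
          = ((\<Sum>k\<in>UNIV. phiL (y i) k * aL k) + (\<Sum>S\<in>QI. phiQ (y i) S * aQ S))
            + t * ((\<Sum>k\<in>UNIV. phiL (y i) k * dL k) + (\<Sum>S\<in>QI. phiQ (y i) S * dQ S))"
          by (simp add: algebra_simps sum.distrib sum_distrib_left)
        also have "\<dots> = (if i = j then 1 else 0)"
          using assms i unfolding mfn_lagrange_coeffs_def lag_constraint_def kerpair_def by simp
        finally have "(\<Sum>k\<in>UNIV. phiL (y i) k * (aL k + t * dL k)) + (\<Sum>S\<in>QI. phiQ (y i) S * (aQ S + t * dQ S)) = (if i = j then 1 else 0)" . }
      then show ?thesis unfolding lag_constraint_def by blast
    qed
    note lc = this
    have all: "\<forall>bL bQ. lag_constraint y p j bL bQ \<longrightarrow>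
        (\<Sum>S\<in>QI. (aQ S)^2) / 2 \<le> (\<Sum>S\<in>QI. (bQ S)^2) / 2"
      using assms(1) unfolding mfn_lagrange_coeffs_def by simp
    have "(\<Sum>S\<in>QI. (aQ S)^2) / 2 \<le> (\<Sum>S\<in>QI. (aQ S + t * dQ S)^2) / 2"
      using spec[OF spec[OF all, of "\<lambda>k. aL k + t * dL k"], of "\<lambda>S. aQ S + t * dQ S"] lc by simp
    moreover have "(\<Sum>S\<in>QI. (aQ S + t * dQ S)^2) = (\<Sum>S\<in>QI. (aQ S)^2) + 2*t*c + t^2*N"
    proof -
      have "(\<Sum>S\<in>QI. (aQ S + t * dQ S)^2) = (\<Sum>S\<in>QI. (aQ S)^2 + (2*t)*(aQ S * dQ S) + t^2*(dQ S)^2)"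
        by (rule sum.cong) (simp_all add: power2_eq_square algebra_simps)
      also have "\<dots> = (\<Sum>S\<in>QI. (aQ S)^2) + (2*t)*c + t^2*N"
        unfolding c_def N_def by (simp add: sum.distrib sum_distrib_left)
      finally show ?thesis by simp
    qed
    ultimately show ?thesis by simp
  qed
  define t where "t = -c/(N+1)"
  have e: "t * (N+1) = -c" using N0 unfolding t_def by simp
  have "0 \<le> 2*t*c + t^2 * N" by (rule key)
  then have "0 \<le> (2*t*c + t^2 * N) * (N+1)^2" using N0 by simp
  also have "(2*t*c + t^2 * N) * (N+1)^2 = 2*c*(t * (N+1))*(N+1) + (t * (N+1))^2 * N"
    by (simp add: power2_eq_square algebra_simps)
  also have "\<dots> = -(c^2 * (N + 2))" unfolding e by (simp add: power2_eq_square algebra_simps)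
  finally have "c^2 * (N+2) \<le> 0" by simp
  then have "c^2 \<le> 0" using N0
    by (metis add_nonneg_pos mult_le_0_iff not_le zero_less_numeral zero_le_power2)
  then show ?thesis unfolding c_def[symmetric] by simp
qed


lemma lin_comb:
  assumes lag: "\<forall>j\<le>p. mfn_lagrange_coeffs y p j (aL j) (aQ j)" and i: "i \<le> p"
  shows "(\<Sum>k\<in>UNIV. phiL (y i) k * ALc aL p u k) + (\<Sum>S\<in>QI. phiQ (y i) S * AQc aQ p u S) = u i"
proof -
  have "(\<Sum>k\<in>UNIV. phiL (y i) k * ALc aL p u k) + (\<Sum>S\<in>QI. phiQ (y i) S * AQc aQ p u S)
      = (\<Sum>j\<le>p. u j * ((\<Sum>k\<in>UNIV. phiL (y i) k * aL j k) + (\<Sum>S\<in>QI. phiQ (y i) S * aQ j S)))"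
    unfolding ALc_def AQc_def
    by (simp add: sum_distrib_left sum.distrib sum.swap[of _ UNIV] sum.swap[of _ QI] algebra_simps)
  also have "\<dots> = (\<Sum>j\<le>p. u j * (if i = j then 1 else 0))"
  proof (rule sum.cong)
    fix j assume "j \<in> {..p}"
    then show "u j * ((\<Sum>k\<in>UNIV. phiL (y i) k * aL j k) + (\<Sum>S\<in>QI. phiQ (y i) S * aQ j S)) = u j * (if i = j then 1 else 0)"
      using lag i unfolding mfn_lagrange_coeffs_def lag_constraint_def by simp
  qed simp
  also have "\<dots> = (\<Sum>j\<le>p. if i = j then u j else 0)" by (rule sum.cong) auto
  also have "\<dots> = u i" using i by (simp add: sum.delta')
  finally show ?thesis .
qed

lemma AQ_orth:
  assumes lag: "\<forall>j\<le>p. mfn_lagrange_coeffs y p j (aL j) (aQ j)" and "kerpair y p dL dQ"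
  shows "(\<Sum>S\<in>QI. AQc aQ p u S * dQ S) = 0"
proof -
  have "(\<Sum>S\<in>QI. AQc aQ p u S * dQ S) = (\<Sum>j\<le>p. u j * (\<Sum>S\<in>QI. aQ j S * dQ S))"
    unfolding AQc_def by (simp add: sum_distrib_left sum_distrib_right sum.swap[of _ QI] algebra_simps)
  also have "\<dots> = 0"
  proof -
    have "\<forall>j\<in>{..p}. (\<Sum>S\<in>QI. aQ j S * dQ S) = 0" using kkt[OF _ assms(2)] lag by auto
    then show ?thesis by simp
  qed
  finally show ?thesis .
qed

lemma unique_sol:
  assumes lag: "\<forall>j\<le>p. mfn_lagrange_coeffs y p j (aL j) (aQ j)" and poised: "mfn_poised y p"
    and sol: "\<forall>i\<le>p. (\<Sum>k\<in>UNIV. phiL (y i) k * bL k) + (\<Sum>S\<in>QI. phiQ (y i) S * bQ S) = u i"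
    and orth: "\<forall>dL dQ. kerpair y p dL dQ \<longrightarrow> (\<Sum>S\<in>QI. bQ S * dQ S) = 0"
  shows "(\<forall>S\<in>QI. bQ S = AQc aQ p u S) \<and> (\<forall>k. bL k = ALc aL p u k)"
proof -
  define dL where "dL = (\<lambda>k. bL k - ALc aL p u k)"
  define dQ where "dQ = (\<lambda>S. bQ S - AQc aQ p u S)"
  have ker: "kerpair y p dL dQ"
    unfolding kerpair_def
  proof (intro allI impI)
    fix i assume i: "i \<le> p"
    have "(\<Sum>k\<in>UNIV. phiL (y i) k * dL k) + (\<Sum>S\<in>QI. phiQ (y i) S * dQ S)
      = ((\<Sum>k\<in>UNIV. phiL (y i) k * bL k) + (\<Sum>S\<in>QI. phiQ (y i) S * bQ S))
       - ((\<Sum>k\<in>UNIV. phiL (y i) k * ALc aL p u k) + (\<Sum>S\<in>QI. phiQ (y i) S * AQc aQ p u S))"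
      unfolding dL_def dQ_def by (simp add: algebra_simps sum_subtractf)
    also have "\<dots> = 0" using sol lin_comb[OF lag i] i by simp
    finally show "(\<Sum>k\<in>UNIV. phiL (y i) k * dL k) + (\<Sum>S\<in>QI. phiQ (y i) S * dQ S) = 0" .
  qed
  have "(\<Sum>S\<in>QI. (dQ S)^2) = (\<Sum>S\<in>QI. bQ S * dQ S - AQc aQ p u S * dQ S)"
    by (rule sum.cong) (simp_all add: dQ_def power2_eq_square algebra_simps)
  also have "\<dots> = (\<Sum>S\<in>QI. bQ S * dQ S) - (\<Sum>S\<in>QI. AQc aQ p u S * dQ S)"
    by (simp add: sum_subtractf)
  also have "\<dots> = 0" using orth ker AQ_orth[OF lag ker] by simp
  finally have z: "(\<Sum>S\<in>QI. (dQ S)^2) = 0" .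
  have dQ0: "\<forall>S\<in>QI. dQ S = 0"
    using z finite_QI by (simp add: sum_nonneg_eq_0_iff)
  then have Q: "\<forall>S\<in>QI. bQ S = AQc aQ p u S" unfolding dQ_def by simp
  have "\<forall>i\<le>p. (\<Sum>k\<in>UNIV. phiL (y i) k * dL k) = 0"
    using ker dQ0 unfolding kerpair_def by simp
  then have "\<forall>k. dL k = 0" using MLinj[OF poised] by blast
  then show ?thesis using Q unfolding dL_def by simp
qed

lemma qpoly_comb:
  "qpoly (ALc aL p u) (AQc aQ p u) x = (\<Sum>j\<le>p. u j * qpoly (aL j) (aQ j) x)"
  unfolding qpoly_def ALc_def AQc_def
  by (simp add: sum_distrib_left sum_distrib_right sum.distrib sum.swap[of _ UNIV] sum.swap[of _ QI] algebra_simps)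


lemma lagrange_is_lambda:
  assumes lag: "\<forall>j\<le>p. mfn_lagrange_coeffs y p j (aL j) (aQ j)" and poised: "mfn_poised y p"
  shows "mfn_lambda y p x (\<lambda>i. qpoly (aL i) (aQ i) x)"
proof -
  define ls where "ls = (\<lambda>i. qpoly (aL i) (aQ i) x)"
  have cons: "lam_constraint y p x ls"
    unfolding lam_constraint_def
  proof
    fix k0
    define u where "u = (\<lambda>i. phiL (y i) k0)"
    define \<beta> where "\<beta> = (\<lambda>k. if k = k0 then 1 else (0::real))"
    have sol: "\<forall>i\<le>p. (\<Sum>k\<in>UNIV. phiL (y i) k * \<beta> k) + (\<Sum>S\<in>QI. phiQ (y i) S * (\<lambda>_. 0) S) = u i"
      unfolding u_def \<beta>_def by (simp add: if_distrib[of "(*) _"] sum.delta' cong: if_cong)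
    have "(\<forall>S\<in>QI. (\<lambda>_. 0) S = AQc aQ p u S) \<and> (\<forall>k. \<beta> k = ALc aL p u k)"
      by (rule unique_sol[OF lag poised sol]) simp
    then have Q: "\<forall>S\<in>QI. AQc aQ p u S = 0" and L: "\<forall>k. ALc aL p u k = \<beta> k" by auto
    have "(\<Sum>i\<le>p. phiL (y i) k0 * ls i) = qpoly (ALc aL p u) (AQc aQ p u) x"
      unfolding qpoly_comb ls_def u_def ..
    also have "\<dots> = (\<Sum>k\<in>UNIV. \<beta> k * phiL x k)"
      unfolding qpoly_def using Q L by simp
    also have "\<dots> = phiL x k0" unfolding \<beta>_def by (simp add: if_distrib[of "\<lambda>a. a * _"] sum.delta' cong: if_cong)
    finally show "(\<Sum>i\<le>p. phiL (y i) k0 * ls i) = phiL x k0" .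
  qed
  have opt: "lam_objective y p x ls \<le> lam_objective y p x lam'" if c': "lam_constraint y p x lam'" for lam'
  proof -
    define d where "d = (\<lambda>i. lam' i - ls i)"
    have dker: "(\<Sum>i\<le>p. phiL (y i) k * d i) = 0" for k
      using c' cons unfolding lam_constraint_def d_def by (simp add: algebra_simps sum_subtractf)
    define v where "v = (\<lambda>S. \<Sum>i\<le>p. phiQ (y i) S * d i)"
    define u where "u = (\<lambda>i. \<Sum>S\<in>QI. phiQ (y i) S * v S)"
    have sol: "\<forall>i\<le>p. (\<Sum>k\<in>UNIV. phiL (y i) k * (\<lambda>_. 0) k) + (\<Sum>S\<in>QI. phiQ (y i) S * v S) = u i"
      unfolding u_def by simp
    have orth: "\<forall>dL dQ. kerpair y p dL dQ \<longrightarrow> (\<Sum>S\<in>QI. v S * dQ S) = 0"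
    proof (intro allI impI)
      fix dL dQ assume k: "kerpair y p dL dQ"
      have "(\<Sum>S\<in>QI. v S * dQ S) = (\<Sum>i\<le>p. d i * (\<Sum>S\<in>QI. phiQ (y i) S * dQ S))"
        unfolding v_def by (simp add: sum_distrib_left sum_distrib_right sum.swap[of _ QI] algebra_simps)
      also have "\<dots> = (\<Sum>i\<le>p. d i * (- (\<Sum>k\<in>UNIV. phiL (y i) k * dL k)))"
      proof (rule sum.cong)
        fix i assume "i \<in> {..p}"
        then have "(\<Sum>k\<in>UNIV. phiL (y i) k * dL k) + (\<Sum>S\<in>QI. phiQ (y i) S * dQ S) = 0"
          using k unfolding kerpair_def by simp
        then have "(\<Sum>S\<in>QI. phiQ (y i) S * dQ S) = - (\<Sum>k\<in>UNIV. phiL (y i) k * dL k)" by linarith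
        then show "d i * (\<Sum>S\<in>QI. phiQ (y i) S * dQ S) = d i * (- (\<Sum>k\<in>UNIV. phiL (y i) k * dL k))" by simp
      qed simp
      also have "\<dots> = - (\<Sum>k\<in>UNIV. dL k * (\<Sum>i\<le>p. phiL (y i) k * d i))"
        by (simp add: sum_distrib_left sum_distrib_right sum.swap[of _ UNIV] algebra_simps sum_negf)
      also have "\<dots> = 0" using dker by simp
      finally show "(\<Sum>S\<in>QI. v S * dQ S) = 0" .
    qed
    have "(\<forall>S\<in>QI. v S = AQc aQ p u S) \<and> (\<forall>k. (\<lambda>_. 0) k = ALc aL p u k)"
      by (rule unique_sol[OF lag poised sol orth])
    then have Q: "\<forall>S\<in>QI. AQc aQ p u S = v S" and L: "\<forall>k. ALc aL p u k = 0" by auto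
    have "(\<Sum>i\<le>p. u i * ls i) = qpoly (ALc aL p u) (AQc aQ p u) x"
      unfolding qpoly_comb ls_def ..
    also have "\<dots> = (\<Sum>S\<in>QI. v S * phiQ x S)"
      unfolding qpoly_def using Q L by simp
    finally have key: "(\<Sum>i\<le>p. u i * ls i) = (\<Sum>S\<in>QI. v S * phiQ x S)" .
    define a where "a = (\<lambda>S. (\<Sum>i\<le>p. phiQ (y i) S * ls i) - phiQ x S)"
    have av: "(\<Sum>S\<in>QI. a S * v S) = 0"
    proof -
      have "(\<Sum>S\<in>QI. a S * v S) = (\<Sum>S\<in>QI. (\<Sum>i\<le>p. phiQ (y i) S * ls i) * v S) - (\<Sum>S\<in>QI. v S * phiQ x S)"
        unfolding a_def by (simp add: algebra_simps sum_subtractf)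
      also have "(\<Sum>S\<in>QI. (\<Sum>i\<le>p. phiQ (y i) S * ls i) * v S) = (\<Sum>i\<le>p. u i * ls i)"
        unfolding u_def by (simp add: sum_distrib_left sum_distrib_right sum.swap[of _ QI] algebra_simps)
      finally show ?thesis using key by simp
    qed
    have lam': "(\<Sum>i\<le>p. phiQ (y i) S * lam' i) - phiQ x S = a S + v S" for S
    proof -
      have "lam' = (\<lambda>i. ls i + d i)" unfolding d_def by auto
      then show ?thesis unfolding a_def v_def by (simp add: algebra_simps sum.distrib)
    qed
    have "lam_objective y p x lam' = (\<Sum>S\<in>QI. (a S + v S)^2) / 2"
      unfolding lam_objective_def lam' ..
    also have "(\<Sum>S\<in>QI. (a S + v S)^2) = (\<Sum>S\<in>QI. (a S)^2) + 2 * (\<Sum>S\<in>QI. a S * v S) + (\<Sum>S\<in>QI. (v S)^2)"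
    proof -
      have "(\<Sum>S\<in>QI. (a S + v S)^2) = (\<Sum>S\<in>QI. (a S)^2 + 2 * (a S * v S) + (v S)^2)"
        by (rule sum.cong) (simp_all add: power2_eq_square algebra_simps)
      then show ?thesis by (simp add: sum.distrib sum_distrib_left)
    qed
    also have "lam_objective y p x ls = (\<Sum>S\<in>QI. (a S)^2) / 2"
      unfolding lam_objective_def a_def ..
    moreover have "(\<Sum>S\<in>QI. (v S)^2) \<ge> 0" by (simp add: sum_nonneg)
    ultimately show ?thesis using av by simp
  qed
  show ?thesis unfolding mfn_lambda_def ls_def[symmetric] using cons opt by blast
qed

lemma lagrange_bound:
  assumes lag: "\<forall>j\<le>p. mfn_lagrange_coeffs y p j (aL j) (aQ j)"
    and LP: "mfn_Lambda_poised y p Lam B" and x: "x \<in> B" and j: "j \<le> p"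
  shows "\<bar>qpoly (aL j) (aQ j) x\<bar> \<le> Lam"
proof -
  have poised: "mfn_poised y p" using LP unfolding mfn_Lambda_poised_def by simp
  have "\<forall>x\<in>B. \<forall>lam. mfn_lambda y p x lam \<longrightarrow> (\<forall>i\<le>p. \<bar>lam i\<bar> \<le> Lam)"
    using LP unfolding mfn_Lambda_poised_def by simp
  then have "\<forall>i\<le>p. \<bar>(\<lambda>i. qpoly (aL i) (aQ i) x) i\<bar> \<le> Lam"
    using x lagrange_is_lambda[OF lag poised, of x] by blast
  then show ?thesis using j by simp
qed


lemma sym_onorm:
  fixes H :: "real^'n^'n"
  assumes sym: "\<And>v w. (H *v v) \<bullet> w = (H *v w) \<bullet> v"
    and bd: "\<And>v. \<bar>(H *v v) \<bullet> v\<bar> \<le> M * (norm v)^2" and M: "M \<ge> 0"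
  shows "onorm (\<lambda>v. H *v v) \<le> M"
proof (rule onorm_le)
  have polar: "4 * ((H *v a) \<bullet> b) \<le> 2 * M * ((norm a)^2 + (norm b)^2)" for a b
  proof -
    have "4 * ((H *v a) \<bullet> b) = (H *v (a+b)) \<bullet> (a+b) - (H *v (a-b)) \<bullet> (a-b)"
      using sym[of b a] by (simp add: algebra_simps inner_add_left inner_add_right inner_diff_left inner_diff_right)
    also have "\<dots> \<le> M * (norm (a+b))^2 + M * (norm (a-b))^2"
      using bd[of "a+b"] bd[of "a-b"] by linarith
    also have "\<dots> = 2 * M * ((norm a)^2 + (norm b)^2)"
      by (simp add: power2_norm_eq_inner inner_add_left inner_add_right inner_diff_left inner_diff_right
          inner_commute algebra_simps)
    finally show ?thesis .
  qed
  fix v :: "real^'n"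
  show "norm (H *v v) \<le> M * norm v"
  proof (cases "H *v v = 0")
    case True then show ?thesis using M by simp
  next
    case False
    define w where "w = H *v v"
    have wn: "norm w > 0" using False w_def by simp
    have vn: "v \<noteq> 0" using False by auto
    define b where "b = (norm v / norm w) *\<^sub>R w"
    have nb: "norm b = norm v" unfolding b_def using wn by simp
    have "(H *v v) \<bullet> b = (norm v / norm w) * (norm w)^2"
      unfolding b_def w_def[symmetric] by (simp add: power2_norm_eq_inner)
    also have "\<dots> = norm v * norm w" using wn by (simp add: power2_eq_square)
    finally have "4 * (norm v * norm w) \<le> 2 * M * ((norm v)^2 + (norm v)^2)"
      using polar[of v b] nb by simp
    then have "norm v * norm w \<le> norm v * (M * norm v)" by (simp add: power2_eq_square algebra_simps)
    then have "norm w \<le> M * norm v" using vn by simp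
    then show ?thesis unfolding w_def .
  qed
qed

lemma phiQ_rep:
  assumes "S \<in> QI"
  shows "\<exists>a b c. \<forall>z::real^'n. phiQ z S = c * (z$a * z$b)"
proof -
  have "card S = 1 \<or> card S = 2" using assms unfolding QI_def by simp
  then show ?thesis
  proof
    assume c1: "card S = 1"
    then obtain i where S: "S = {i}" by (rule card_1_singletonE)
    show ?thesis by (rule exI[of _ i], rule exI[of _ i], rule exI[of _ "1/2"])
      (simp add: phiQ_def S power2_eq_square)
  next
    assume c2: "card S = 2"
    then obtain i j where S: "S = {i,j}" "i \<noteq> j" by (auto simp: card_2_iff)
    show ?thesis by (rule exI[of _ i], rule exI[of _ j], rule exI[of _ 1])
      (simp add: phiQ_def S)
  qed
qed

lemma phiQ_par:
  fixes a b v :: "real^'n"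
  assumes "S \<in> QI"
  shows "phiQ (a+b) S + phiQ (a-b) S = 2 * phiQ a S + 2 * phiQ b S"
    and "phiQ (t *\<^sub>R v) S = t^2 * phiQ v S"
proof -
  obtain i j c where r0: "\<forall>z::real^'n. phiQ z S = c * (z$i * z$j)" using phiQ_rep[OF assms] by blast
  have r: "\<And>z::real^'n. phiQ z S = c * (z$i * z$j)" using r0 by blast
  show "phiQ (a+b) S + phiQ (a-b) S = 2 * phiQ a S + 2 * phiQ b S"
    unfolding r by (simp add: algebra_simps)
  show "phiQ (t *\<^sub>R v) S = t^2 * phiQ v S"
    unfolding r by (simp add: algebra_simps power2_eq_square)
qed

definition Qf :: "('n set \<Rightarrow> real) \<Rightarrow> real^'n \<Rightarrow> real" where
  "Qf w z = (\<Sum>S\<in>QI. w S * phiQ z S)"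

lemma qpoly_second_diff:
  "qpoly bL bQ (c+e) + qpoly bL bQ (c-e) - 2 * qpoly bL bQ c = 2 * Qf bQ e"
proof -
  have L: "phiL (c+e) k + phiL (c-e) k = 2 * phiL c k" for k
    by (cases k) (simp_all add: phiL_def)
  have "qpoly bL bQ (c+e) + qpoly bL bQ (c-e) - 2 * qpoly bL bQ c
     = (\<Sum>k\<in>UNIV. bL k * (phiL (c+e) k + phiL (c-e) k - 2 * phiL c k))
     + (\<Sum>S\<in>QI. bQ S * (phiQ (c+e) S + phiQ (c-e) S - 2 * phiQ c S))"
    unfolding qpoly_def by (simp add: algebra_simps sum.distrib sum_subtractf sum_distrib_left)
  also have "\<dots> = (\<Sum>S\<in>QI. bQ S * (2 * phiQ e S))"
  proof -
    have "(\<Sum>k\<in>UNIV. bL k * (phiL (c+e) k + phiL (c-e) k - 2 * phiL c k)) = 0" using L by simp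
    moreover have "(\<Sum>S\<in>QI. bQ S * (phiQ (c+e) S + phiQ (c-e) S - 2 * phiQ c S)) = (\<Sum>S\<in>QI. bQ S * (2 * phiQ e S))"
    proof (rule sum.cong)
      fix S :: "'a set" assume "S \<in> QI"
      then show "bQ S * (phiQ (c+e) S + phiQ (c-e) S - 2 * phiQ c S) = bQ S * (2 * phiQ e S)"
        using phiQ_par(1)[OF \<open>S \<in> QI\<close>, of c e] by simp
    qed simp
    ultimately show ?thesis by simp
  qed
  also have "\<dots> = 2 * Qf bQ e" unfolding Qf_def by (simp add: sum_distrib_left algebra_simps)
  finally show ?thesis .
qed

lemma Qf_scale: "Qf w (t *\<^sub>R v) = t^2 * Qf w v"
proof -
  have "Qf w (t *\<^sub>R v) = (\<Sum>S\<in>QI. t^2 * (w S * phiQ v S))"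
    unfolding Qf_def
  proof (rule sum.cong)
    fix S :: "'a set" assume "S \<in> QI"
    then show "w S * phiQ (t *\<^sub>R v) S = t^2 * (w S * phiQ v S)"
      using phiQ_par(2)[OF \<open>S \<in> QI\<close>, of t v] by simp
  qed simp
  then show ?thesis unfolding Qf_def by (simp add: sum_distrib_left)
qed

lemma Qf_comb: "Qf (AQc aQ p r) v = (\<Sum>j\<le>p. r j * Qf (aQ j) v)"
  unfolding Qf_def AQc_def by (simp add: sum_distrib_left sum_distrib_right sum.swap[of _ QI] algebra_simps)


lemma vecnth_deriv[derivative_intros]:
  "(f has_derivative f') F \<Longrightarrow> ((\<lambda>x. f x $ i) has_derivative (\<lambda>x. f' x $ i)) F"
  by (rule bounded_linear.has_derivative[OF bounded_linear_vec_nth])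

lemma hess_bound:
  fixes bL :: "'n::finite option \<Rightarrow> real" and C :: "'n set \<Rightarrow> real" and H :: "real^'n^'n"
  assumes hes: "is_hessian (qpoly bL C) x H"
    and bd: "\<And>v. \<bar>Qf C v\<bar> \<le> K * (norm v)^2" and K: "K \<ge> 0"
  shows "onorm (\<lambda>v. H *v v) \<le> 2*K"
proof -
  have "\<forall>S\<in>QI. \<exists>t. \<forall>z::real^'n. phiQ z S = snd (snd t) * (z $ fst t * z $ fst (snd t))"
  proof
    fix S :: "'n set" assume "S \<in> QI"
    then obtain a b c where r: "\<forall>z::real^'n. phiQ z S = c * (z$a * z$b)" using phiQ_rep by blast
    show "\<exists>t. \<forall>z::real^'n. phiQ z S = snd (snd t) * (z $ fst t * z $ fst (snd t))"
      by (rule exI[of _ "(a,b,c)"]) (simp add: r)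
  qed
  then obtain T where T: "\<forall>S\<in>QI. \<forall>z::real^'n. phiQ z S = snd (snd (T S)) * (z $ fst (T S) * z $ fst (snd (T S)))"
    by (rule bchoice[elim_format]) blast
  define A where "A = (\<lambda>S. fst (T S))"
  define B where "B = (\<lambda>S. fst (snd (T S)))"
  define Cc where "Cc = (\<lambda>S. snd (snd (T S)))"
  have rep: "phiQ z S = Cc S * (z $ A S * z $ B S)" if "S \<in> QI" for z S
    using T that unfolding A_def B_def Cc_def by blast
  have qform: "qpoly bL C z = bL None + (\<Sum>i\<in>UNIV. bL (Some i) * z$i) + (\<Sum>S\<in>QI. C S * (Cc S * (z $ A S * z $ B S)))" for z
  proof -
    have "(\<Sum>k\<in>UNIV. bL k * phiL z k) = bL None + (\<Sum>i\<in>UNIV. bL (Some i) * z$i)"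
      by (simp add: UNIV_option_conv sum.reindex phiL_def)
    moreover have "(\<Sum>S\<in>QI. C S * phiQ z S) = (\<Sum>S\<in>QI. C S * (Cc S * (z $ A S * z $ B S)))"
      using rep by (intro sum.cong) simp_all
    ultimately show ?thesis unfolding qpoly_def by simp
  qed
  define D where "D = (\<lambda>z h. (\<Sum>i\<in>UNIV. bL (Some i) * h$i) + (\<Sum>S\<in>QI. C S * (Cc S * (h $ A S * z $ B S + z $ A S * h $ B S))))"
  have mD: "(qpoly bL C has_derivative D z) (at z)" for z
  proof -
    have "((\<lambda>z. bL None + (\<Sum>i\<in>UNIV. bL (Some i) * z$i) + (\<Sum>S\<in>QI. C S * (Cc S * (z $ A S * z $ B S))))
        has_derivative D z) (at z)"
      unfolding D_def by (auto intro!: derivative_eq_intros simp: algebra_simps)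
    moreover have "qpoly bL C = (\<lambda>z. bL None + (\<Sum>i\<in>UNIV. bL (Some i) * z$i) + (\<Sum>S\<in>QI. C S * (Cc S * (z $ A S * z $ B S))))"
      using qform by auto
    ultimately show ?thesis by simp
  qed
  obtain g where g1: "\<And>z. (qpoly bL C has_derivative (\<lambda>h. g z \<bullet> h)) (at z)"
    and g2: "(g has_derivative (\<lambda>h. H *v h)) (at x)"
    using hes unfolding is_hessian_def by blast
  have gD: "g z \<bullet> h = D z h" for z h
    using has_derivative_unique[OF g1 mD] by metis
  define E where "E = (\<lambda>h w. (\<Sum>S\<in>QI. C S * (Cc S * (h $ A S * w $ B S + w $ A S * h $ B S))))"
  have HE: "(H *v h) \<bullet> w = E h w" for h w
  proof -
    have d1: "((\<lambda>z. g z \<bullet> w) has_derivative (\<lambda>h. (H *v h) \<bullet> w)) (at x)"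
      using g2 by (auto intro!: derivative_eq_intros)
    have d2: "((\<lambda>z. D z w) has_derivative (\<lambda>h. E h w)) (at x)"
      unfolding D_def E_def by (auto intro!: derivative_eq_intros simp: algebra_simps)
    have "(\<lambda>z. g z \<bullet> w) = (\<lambda>z. D z w)" using gD by auto
    then have "(\<lambda>h. (H *v h) \<bullet> w) = (\<lambda>h. E h w)" using has_derivative_unique[OF d1] d2 by simp
    then show ?thesis by metis
  qed
  have Esym: "E h w = E w h" for h w
    unfolding E_def by (intro sum.cong) (simp_all add: algebra_simps)
  have Ediag: "E v v = 2 * Qf C v" for v
  proof -
    have "E v v = (\<Sum>S\<in>QI. 2 * (C S * phiQ v S))"
      unfolding E_def using rep by (intro sum.cong) (simp_all add: algebra_simps)
    then show ?thesis unfolding Qf_def by (simp add: sum_distrib_left)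
  qed
  show ?thesis
  proof (rule sym_onorm)
    show "(H *v v) \<bullet> w = (H *v w) \<bullet> v" for v w using HE Esym by simp
    show "\<bar>(H *v v) \<bullet> v\<bar> \<le> 2 * K * (norm v)^2" for v using HE Ediag bd[of v] by simp
    show "0 \<le> 2 * K" using K by simp
  qed
qed


lemma taylor_lip:
  fixes f :: "real^'n \<Rightarrow> real" and gradf :: "real^'n \<Rightarrow> real^'n"
  assumes grad: "\<forall>x\<in>X. (f has_derivative (\<lambda>h. gradf x \<bullet> h)) (at x)"
    and lip: "L-lipschitz_on X gradf"
    and seg: "\<And>t. 0 \<le> t \<Longrightarrow> t \<le> 1 \<Longrightarrow> a + t *\<^sub>R d \<in> X"
  shows "\<bar>f (a + d) - f a - gradf a \<bullet> d\<bar> \<le> L/2 * (norm d)^2"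
proof -
  have L0: "L \<ge> 0" using lip by (rule lipschitz_on_nonneg)
  have a: "a \<in> X" using seg[of 0] by simp
  have Dphi: "((\<lambda>t. f (a + t *\<^sub>R d)) has_real_derivative (gradf (a + t *\<^sub>R d) \<bullet> d)) (at t)"
    if "0 \<le> t" "t \<le> 1" for t
  proof -
    have l: "((\<lambda>t. a + t *\<^sub>R d) has_derivative (\<lambda>s. s *\<^sub>R d)) (at t)"
      by (auto intro!: derivative_eq_intros)
    have "(f has_derivative (\<lambda>h. gradf (a + t *\<^sub>R d) \<bullet> h)) (at (a + t *\<^sub>R d))"
      using grad seg[OF that] by blast
    from has_derivative_compose[OF l this]
    have "((\<lambda>t. f (a + t *\<^sub>R d)) has_derivative (\<lambda>s. gradf (a + t *\<^sub>R d) \<bullet> (s *\<^sub>R d))) (at t)" .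
    moreover have "(\<lambda>s. gradf (a + t *\<^sub>R d) \<bullet> (s *\<^sub>R d)) = (*) (gradf (a + t *\<^sub>R d) \<bullet> d)"
      by (auto simp: algebra_simps)
    ultimately show ?thesis unfolding has_field_derivative_def by simp
  qed
  have gb: "\<bar>(gradf (a + t *\<^sub>R d) - gradf a) \<bullet> d\<bar> \<le> L * t * (norm d)^2" if "0 \<le> t" "t \<le> 1" for t
  proof -
    have "\<bar>(gradf (a + t *\<^sub>R d) - gradf a) \<bullet> d\<bar> \<le> norm (gradf (a + t *\<^sub>R d) - gradf a) * norm d"
      by (rule Cauchy_Schwarz_ineq2)
    also have "norm (gradf (a + t *\<^sub>R d) - gradf a) \<le> L * norm (t *\<^sub>R d)"
      using lipschitz_onD[OF lip seg[OF that] a] by (simp add: dist_norm)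
    then have "norm (gradf (a + t *\<^sub>R d) - gradf a) * norm d \<le> L * norm (t *\<^sub>R d) * norm d"
      by (simp add: mult_right_mono)
    also have "L * norm (t *\<^sub>R d) * norm d = L * t * (norm d)^2" using that by (simp add: power2_eq_square)
    finally show ?thesis .
  qed
  define g where "g = gradf a \<bullet> d"
  define N where "N = (norm d)^2"
  have up: "f (a + d) - f a - g \<le> L/2 * N"
  proof -
    let ?psi = "\<lambda>t. f (a + t *\<^sub>R d) - t * g - L/2 * t^2 * N"
    have "?psi 1 \<le> ?psi 0"
    proof (rule DERIV_nonpos_imp_nonincreasing[of 0 1])
      fix t :: real assume t: "0 \<le> t" "t \<le> 1"
      have "(?psi has_real_derivative (gradf (a + t *\<^sub>R d) \<bullet> d - g - L/2 * (2 * t) * N)) (at t)"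
        by (auto intro!: derivative_eq_intros Dphi[OF t] simp: power2_eq_square)
      moreover have "gradf (a + t *\<^sub>R d) \<bullet> d - g - L/2 * (2 * t) * N \<le> 0"
        using gb[OF t] unfolding g_def N_def by (simp add: inner_diff_left abs_le_iff)
      ultimately show "\<exists>y. (?psi has_real_derivative y) (at t) \<and> y \<le> 0" by blast
    qed simp
    then show ?thesis by simp
  qed
  have lo: "- (L/2 * N) \<le> f (a + d) - f a - g"
  proof -
    let ?psi = "\<lambda>t. f (a + t *\<^sub>R d) - t * g + L/2 * t^2 * N"
    have "?psi 0 \<le> ?psi 1"
    proof (rule DERIV_nonneg_imp_nondecreasing[of 0 1])
      fix t :: real assume t: "0 \<le> t" "t \<le> 1"
      have "(?psi has_real_derivative (gradf (a + t *\<^sub>R d) \<bullet> d - g + L/2 * (2 * t) * N)) (at t)"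
        by (auto intro!: derivative_eq_intros Dphi[OF t] simp: power2_eq_square)
      moreover have "gradf (a + t *\<^sub>R d) \<bullet> d - g + L/2 * (2 * t) * N \<ge> 0"
        using gb[OF t] unfolding g_def N_def by (simp add: inner_diff_left abs_le_iff)
      ultimately show "\<exists>y. (?psi has_real_derivative y) (at t) \<and> y \<ge> 0" by blast
    qed simp
    then show ?thesis by simp
  qed
  show ?thesis using up lo unfolding g_def[symmetric] N_def[symmetric] by linarith
qed

theorem theorem3:
  fixes f :: "real^'n \<Rightarrow> real"
    and gradf :: "real^'n \<Rightarrow> real^'n"
    and X :: "(real^'n) set"
    and y :: "nat \<Rightarrow> real^'n"
    and p :: nat and L \<delta> \<delta>max \<Lambda> \<kappa> :: real
    and \<gamma> :: "nat \<Rightarrow> real"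
    and aL :: "nat \<Rightarrow> 'n option \<Rightarrow> real" and aQ :: "nat \<Rightarrow> 'n set \<Rightarrow> real"
  defines "n \<equiv> CARD('n)"
  defines "q \<equiv> (n^2 + 3*n) div 2"
  assumes X: "open X" "bounded X" "cball (y 0) \<delta> \<subseteq> X"
    and grad: "\<forall>x\<in>X. (f has_derivative (\<lambda>h. gradf x \<bullet> h)) (at x)"
    and lip: "L-lipschitz_on X gradf"
    and pq: "n < p" "p < q"
    and \<delta>: "\<delta> > 0" "\<delta> \<le> \<delta>max"
    and Y: "\<forall>i\<le>p. y i \<in> cball (y 0) \<delta>"
    and poised: "mfn_poised y p"
    and Lpoised: "mfn_Lambda_poised y p \<Lambda> (cball (y 0) \<delta>)"
    and \<Lambda>: "\<Lambda> > 0"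
    and \<kappa>: "\<kappa> \<ge> 0"
    and lag: "\<forall>j\<le>p. mfn_lagrange_coeffs y p j (aL j) (aQ j)"
    and relaxed: "\<forall>j\<le>p. \<bar>(\<Sum>i\<le>p. qpoly (aL i) (aQ i) (y j) * \<gamma> i) - f (y j)\<bar> \<le> \<kappa> * \<delta>^2"
  shows "\<forall>x H. is_hessian (\<lambda>z. \<Sum>j\<le>p. qpoly (aL j) (aQ j) z * \<gamma> j) x H \<longrightarrow>
           onorm (\<lambda>v. H *v v) \<le> (\<kappa> + L/2) * (4 * \<Lambda> * real (p+1) * sqrt (2 * real (q+1)))
                 / (min 1 (min (1/\<delta>max) (1/\<delta>max^2)))^2"
proof (intro allI impI)
  fix x H
  assume hes: "is_hessian (\<lambda>z. \<Sum>j\<le>p. qpoly (aL j) (aQ j) z * \<gamma> j) x H"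
  have L0: "L \<ge> 0" using lip by (rule lipschitz_on_nonneg)
  have poised': "mfn_poised y p" using poised .
  define y0 where "y0 = y 0"
  define B where "B = cball y0 \<delta>"
  have LB: "\<bar>qpoly (aL j) (aQ j) z\<bar> \<le> \<Lambda>" if "z \<in> B" "j \<le> p" for z j
    using lagrange_bound[OF lag Lpoised] that unfolding B_def y0_def by blast
  have interp: "(\<Sum>i\<le>p. qpoly (aL i) (aQ i) (y j) * \<gamma> i) = \<gamma> j" if j: "j \<le> p" for j
  proof -
    have "qpoly (aL i) (aQ i) (y j) = (if j = i then 1 else 0)" if "i \<le> p" for i
      using lag that j unfolding mfn_lagrange_coeffs_def lag_constraint_def qpoly_def
      by (simp add: mult.commute)
    then have "(\<Sum>i\<le>p. qpoly (aL i) (aQ i) (y j) * \<gamma> i) = (\<Sum>i\<le>p. if j = i then \<gamma> i else 0)"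
      by (intro sum.cong) auto
    also have "\<dots> = \<gamma> j" using j by (simp add: sum.delta)
    finally show ?thesis .
  qed
  define \<beta> where "\<beta> = (\<lambda>k. case k of None \<Rightarrow> f y0 - gradf y0 \<bullet> y0 | Some i \<Rightarrow> gradf y0 $ i)"
  have lin0: "(\<Sum>k\<in>UNIV. phiL z k * \<beta> k) = f y0 + gradf y0 \<bullet> (z - y0)" for z
  proof -
    have "(\<Sum>k\<in>UNIV. phiL z k * \<beta> k) = \<beta> None + (\<Sum>i\<in>UNIV. z $ i * gradf y0 $ i)"
      by (simp add: UNIV_option_conv sum.reindex phiL_def \<beta>_def)
    also have "(\<Sum>i\<in>UNIV. z $ i * gradf y0 $ i) = gradf y0 \<bullet> z"
      by (simp add: inner_vec_def mult.commute)
    finally show ?thesis unfolding \<beta>_def by (simp add: inner_diff_right)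
  qed
  define r where "r = (\<lambda>j. \<gamma> j - (f y0 + gradf y0 \<bullet> (y j - y0)))"
  have rb: "\<bar>r j\<bar> \<le> (\<kappa> + L/2) * \<delta>^2" if j: "j \<le> p" for j
  proof -
    have yj: "y j \<in> cball y0 \<delta>" using Y j unfolding y0_def by blast
    have "\<bar>f (y0 + (y j - y0)) - f y0 - gradf y0 \<bullet> (y j - y0)\<bar> \<le> L/2 * (norm (y j - y0))^2"
    proof (rule taylor_lip[OF grad lip])
      fix t :: real assume t: "0 \<le> t" "t \<le> 1"
      have "dist y0 (y0 + t *\<^sub>R (y j - y0)) = t * norm (y j - y0)" using t by (simp add: dist_norm)
      also have "\<dots> \<le> 1 * \<delta>" using t yj by (intro mult_mono) (auto simp: dist_norm norm_minus_commute)
      finally show "y0 + t *\<^sub>R (y j - y0) \<in> X" using X(3) unfolding y0_def by auto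
    qed
    also have "L/2 * (norm (y j - y0))^2 \<le> L/2 * \<delta>^2"
      using yj L0 by (intro mult_left_mono power_mono) (auto simp: dist_norm norm_minus_commute)
    finally have T: "\<bar>f (y j) - f y0 - gradf y0 \<bullet> (y j - y0)\<bar> \<le> L/2 * \<delta>^2" by simp
    have R: "\<bar>\<gamma> j - f (y j)\<bar> \<le> \<kappa> * \<delta>^2" using relaxed[rule_format, OF j] unfolding interp[OF j] .
    have "r j = (\<gamma> j - f (y j)) + (f (y j) - f y0 - gradf y0 \<bullet> (y j - y0))" unfolding r_def by simp
    then have "\<bar>r j\<bar> \<le> \<kappa> * \<delta>^2 + L/2 * \<delta>^2" using R T by linarith
    then show ?thesis by (simp add: algebra_simps)
  qed
  \<comment> \<open>linear part has zero Hessian coefficient\<close>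
  define u where "u = (\<lambda>i. f y0 + gradf y0 \<bullet> (y i - y0))"
  have solu: "\<forall>i\<le>p. (\<Sum>k\<in>UNIV. phiL (y i) k * \<beta> k) + (\<Sum>S\<in>QI. phiQ (y i) S * (\<lambda>_. 0) S) = u i"
    unfolding u_def using lin0 by simp
  have "(\<forall>S\<in>QI. (\<lambda>_. 0) S = AQc aQ p u S) \<and> (\<forall>k. \<beta> k = ALc aL p u k)"
    by (rule unique_sol[OF lag poised' solu]) simp
  then have Au: "\<forall>S\<in>QI. AQc aQ p u S = 0" by auto
  have Cg: "Qf (AQc aQ p \<gamma>) v = Qf (AQc aQ p r) v" for v
  proof -
    have "AQc aQ p \<gamma> S = AQc aQ p r S + AQc aQ p u S" for S
      unfolding AQc_def r_def u_def by (simp add: algebra_simps sum.distrib[symmetric])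
    then show ?thesis unfolding Qf_def using Au by (intro sum.cong) simp_all
  qed
  have Qj: "\<bar>Qf (aQ j) v\<bar> \<le> 2 * \<Lambda> / \<delta>^2 * (norm v)^2" if j: "j \<le> p" for j v
  proof (cases "v = 0")
    case True
    have "Qf (aQ j) v = Qf (aQ j) (0 *\<^sub>R v)" using True by simp
    also have "\<dots> = 0" by (simp only: Qf_scale) simp
    finally show ?thesis using True by simp
  next
    case False
    define t where "t = \<delta> / norm v"
    have tpos: "t > 0" using False \<delta> unfolding t_def by simp
    define e where "e = t *\<^sub>R v"
    have ne: "norm e = \<delta>" unfolding e_def t_def using False \<delta> by simp
    have inB: "y0 \<in> B" "y0 + e \<in> B" "y0 - e \<in> B" unfolding B_def using ne \<delta> by (auto simp: dist_norm)
    have "2 * Qf (aQ j) e = qpoly (aL j) (aQ j) (y0+e) + qpoly (aL j) (aQ j) (y0-e) - 2 * qpoly (aL j) (aQ j) y0"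
      by (rule qpoly_second_diff[symmetric])
    then have "\<bar>2 * Qf (aQ j) e\<bar> \<le> 4 * \<Lambda>" using LB[OF inB(1) j] LB[OF inB(2) j] LB[OF inB(3) j] by linarith
    then have "\<bar>t^2 * Qf (aQ j) v\<bar> \<le> 2 * \<Lambda>" unfolding e_def Qf_scale by simp
    then have "t^2 * \<bar>Qf (aQ j) v\<bar> \<le> 2 * \<Lambda>" by (simp add: abs_mult)
    moreover have "t^2 = \<delta>^2 / (norm v)^2" unfolding t_def by (simp add: power_divide)
    ultimately have "\<delta>^2 * \<bar>Qf (aQ j) v\<bar> \<le> 2 * \<Lambda> * (norm v)^2" using False by (simp add: field_simps)
    then show ?thesis using \<delta> by (simp add: field_simps)
  qed
  define K where "K = 2 * \<Lambda> * real (p+1) * (\<kappa> + L/2)"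
  have K0: "K \<ge> 0" unfolding K_def using \<Lambda> \<kappa> L0 by simp
  have bd: "\<bar>Qf (AQc aQ p \<gamma>) v\<bar> \<le> K * (norm v)^2" for v
  proof -
    have "\<bar>Qf (AQc aQ p \<gamma>) v\<bar> = \<bar>Qf (AQc aQ p r) v\<bar>" by (simp only: Cg)
    also have "\<dots> = \<bar>\<Sum>j\<le>p. r j * Qf (aQ j) v\<bar>" by (simp only: Qf_comb)
    also have "\<dots> \<le> (\<Sum>j\<le>p. \<bar>r j * Qf (aQ j) v\<bar>)" by (rule sum_abs)
    also have "\<dots> \<le> (\<Sum>j\<le>p. ((\<kappa> + L/2) * \<delta>^2) * (2 * \<Lambda> / \<delta>^2 * (norm v)^2))"
      unfolding abs_mult using rb Qj \<kappa> L0 by (intro sum_mono mult_mono) auto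
    also have "\<dots> = K * (norm v)^2" unfolding K_def using \<delta> by (simp add: field_simps)
    finally show ?thesis .
  qed
  have mq: "(\<lambda>z. \<Sum>j\<le>p. qpoly (aL j) (aQ j) z * \<gamma> j) = qpoly (ALc aL p \<gamma>) (AQc aQ p \<gamma>)"
    unfolding qpoly_comb by (auto simp: mult.commute)
  have "onorm (\<lambda>v. H *v v) \<le> 2 * K"
    by (rule hess_bound[OF hes[unfolded mq] bd K0])
  also have "2 * K \<le> (\<kappa> + L/2) * (4 * \<Lambda> * real (p+1) * sqrt (2 * real (q+1)))
                 / (min 1 (min (1/\<delta>max) (1/\<delta>max^2)))^2"
  proof -
    define c where "c = min 1 (min (1/\<delta>max) (1/\<delta>max^2))"
    have dm: "\<delta>max > 0" using \<delta> by simp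
    have c0: "c > 0" "c \<le> 1" unfolding c_def using dm by auto
    have c2: "c^2 \<le> 1" "c^2 > 0" using c0 by (auto simp: power_le_one)
    have s1: "sqrt (2 * real (q+1)) \<ge> 1" by simp
    have X0: "(\<kappa> + L/2) * (4 * \<Lambda> * real (p+1)) \<ge> 0" using \<Lambda> \<kappa> L0 by simp
    have "2 * K = (\<kappa> + L/2) * (4 * \<Lambda> * real (p+1)) * 1" unfolding K_def by simp
    also have "\<dots> \<le> (\<kappa> + L/2) * (4 * \<Lambda> * real (p+1)) * (sqrt (2 * real (q+1)) / c^2)"
    proof (rule mult_left_mono[OF _ X0])
      have "1 \<le> sqrt (2 * real (q+1))" by (rule s1)
      also have "\<dots> \<le> sqrt (2 * real (q+1)) / c^2" using c2 s1 by (simp add: le_divide_eq)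
      finally show "1 \<le> sqrt (2 * real (q+1)) / c^2" .
    qed
    also have "\<dots> = (\<kappa> + L/2) * (4 * \<Lambda> * real (p+1) * sqrt (2 * real (q+1))) / c^2"
      by simp
    finally show ?thesis unfolding c_def .
  qed
  finally show "onorm (\<lambda>v. H *v v) \<le> (\<kappa> + L/2) * (4 * \<Lambda> * real (p+1) * sqrt (2 * real (q+1)))
                 / (min 1 (min (1/\<delta>max) (1/\<delta>max^2)))^2" .
qed

end
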